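(* Let $G$ be a group and $n$ a positive integer. If $x \in \gamma_j(G)$ and $y \in \gamma_j(G)^4\gamma_{j+1}(G)$ for some $1 \leq j \leq n$, then $(xy)^{4^{n-j}} \equiv x^{4^{n-j}} \pmod{N_{n+1,j}(G)}$.
   Context: $\gamma_1(G) = G$, $\gamma_{i+1}(G) = [\gamma_i(G), G]$. For a subgroup $H$ and integer $m$, $H^m$ is the subgroup generated by all $m$-th powers. For $1 \le k \le n$, $N_{n,k}(G) = \gamma_k(G)^{4^{n-k}}\gamma_{k+1}(G)^{4^{n-k-1}} \cdots \gamma_n(G)$. *)

theory Defs
  imports "HOL-Algebra.Algebra"
begin

definition comm_subgroup :: "('a, 'b) monoid_scheme \<Rightarrow> 'a set \<Rightarrow> 'a set \<Rightarrow> 'a set" where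
  "comm_subgroup G H K = generate G {x \<otimes>\<^bsub>G\<^esub> y \<otimes>\<^bsub>G\<^esub> inv\<^bsub>G\<^esub> x \<otimes>\<^bsub>G\<^esub> inv\<^bsub>G\<^esub> y | x y. x \<in> H \<and> y \<in> K}"

text \<open>lcs G i is gamma_(i+1)(G).\<close>
primrec lcs :: "('a, 'b) monoid_scheme \<Rightarrow> nat \<Rightarrow> 'a set" where
  "lcs G 0 = carrier G"
| "lcs G (Suc i) = comm_subgroup G (lcs G i) (carrier G)"

definition gamma :: "('a, 'b) monoid_scheme \<Rightarrow> nat \<Rightarrow> 'a set" where
  "gamma G k = lcs G (k - 1)"

definition pow_subgroup :: "('a, 'b) monoid_scheme \<Rightarrow> 'a set \<Rightarrow> nat \<Rightarrow> 'a set" where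
  "pow_subgroup G H m = generate G {h [^]\<^bsub>G\<^esub> m | h. h \<in> H}"

text \<open>N_{n,k}(G) = gamma_k^{4^{n-k}} gamma_{k+1}^{4^{n-k-1}} ... gamma_n, as a product of subsets.\<close>
definition Nnk :: "('a, 'b) monoid_scheme \<Rightarrow> nat \<Rightarrow> nat \<Rightarrow> 'a set" where
  "Nnk G n k = foldr (\<lambda>i S. pow_subgroup G (gamma G i) (4 ^ (n - i)) <#>\<^bsub>G\<^esub> S) [k..<n] (gamma G n)"

end

theory Submission
  imports Defs
begin


definition cm :: "('a, 'b) monoid_scheme \<Rightarrow> 'a \<Rightarrow> 'a \<Rightarrow> 'a" where
  "cm G a b = a \<otimes>\<^bsub>G\<^esub> b \<otimes>\<^bsub>G\<^esub> inv\<^bsub>G\<^esub> a \<otimes>\<^bsub>G\<^esub> inv\<^bsub>G\<^esub> b"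

definition ZK :: "('a, 'b) monoid_scheme \<Rightarrow> 'a set \<Rightarrow> 'a set" where
  "ZK G K = {c \<in> carrier G. \<forall>z \<in> carrier G. cm G c z \<in> K}"

context group begin

lemma cancel1[simp]: "x \<in> carrier G \<Longrightarrow> y \<in> carrier G \<Longrightarrow> x \<otimes> (inv x \<otimes> y) = y"
  by (simp add: m_assoc[symmetric])
lemma cancel2[simp]: "x \<in> carrier G \<Longrightarrow> y \<in> carrier G \<Longrightarrow> inv x \<otimes> (x \<otimes> y) = y"
  by (simp add: m_assoc[symmetric])

lemma cm_closed[simp]: "a \<in> carrier G \<Longrightarrow> b \<in> carrier G \<Longrightarrow> cm G a b \<in> carrier G"
  by (simp add: cm_def)

lemma cm_mult: "c1 \<in> carrier G \<Longrightarrow> c2 \<in> carrier G \<Longrightarrow> z \<in> carrier G \<Longrightarrow>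
  cm G (c1 \<otimes> c2) z = (c1 \<otimes> cm G c2 z \<otimes> inv c1) \<otimes> cm G c1 z"
  by (simp add: cm_def m_assoc inv_mult_group)

lemma cm_inv: "c \<in> carrier G \<Longrightarrow> z \<in> carrier G \<Longrightarrow>
  cm G (inv c) z = inv c \<otimes> inv (cm G c z) \<otimes> inv (inv c)"
  by (simp add: cm_def m_assoc inv_mult_group)

lemma cm_pow: "u \<in> carrier G \<Longrightarrow> z \<in> carrier G \<Longrightarrow>
  cm G (u [^] Suc k) z = u \<otimes> cm G (u [^] k) z \<otimes> inv u \<otimes> cm G u z"
proof -
  assume u: "u \<in> carrier G" and z: "z \<in> carrier G"
  have e: "u [^] Suc k = u \<otimes> u [^] k" by (rule nat_pow_Suc2[OF u])
  show ?thesis unfolding e using u z by (simp add: cm_def m_assoc inv_mult_group)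
qed

lemma normal_conj: "K \<lhd> G \<Longrightarrow> x \<in> carrier G \<Longrightarrow> h \<in> K \<Longrightarrow> x \<otimes> h \<otimes> inv x \<in> K"
  using normal_invE(2) by blast

lemma normal_sub: "K \<lhd> G \<Longrightarrow> subgroup K G"
  using normal_invE(1) by blast

lemma ZK_subgroup: assumes K: "K \<lhd> G" shows "subgroup (ZK G K) G"
proof -
  have sK: "subgroup K G" using K normal_sub by blast
  show ?thesis
  proof (rule subgroupI)
    show "ZK G K \<subseteq> carrier G" unfolding ZK_def by auto
    show "ZK G K \<noteq> {}"
    proof -
      have "\<one> \<in> ZK G K" unfolding ZK_def cm_def using subgroup.one_closed[OF sK] by simp
      thus ?thesis by blast
    qed
  next
    fix c assume c: "c \<in> ZK G K"
    hence cc: "c \<in> carrier G" unfolding ZK_def by auto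
    have "\<forall>z\<in>carrier G. cm G (inv c) z \<in> K"
    proof
      fix z assume z: "z \<in> carrier G"
      have "cm G c z \<in> K" using c z unfolding ZK_def by auto
      hence "inv (cm G c z) \<in> K" using subgroup.m_inv_closed[OF sK] by blast
      thus "cm G (inv c) z \<in> K" using cm_inv[OF cc z] normal_conj[OF K, of "inv c"] cc by simp
    qed
    thus "inv c \<in> ZK G K" unfolding ZK_def using cc by auto
  next
    fix c1 c2 assume c1: "c1 \<in> ZK G K" and c2: "c2 \<in> ZK G K"
    hence cc: "c1 \<in> carrier G" "c2 \<in> carrier G" unfolding ZK_def by auto
    have "\<forall>z\<in>carrier G. cm G (c1 \<otimes> c2) z \<in> K"
    proof
      fix z assume z: "z \<in> carrier G"
      have "cm G c1 z \<in> K" "cm G c2 z \<in> K" using c1 c2 z unfolding ZK_def by auto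
      thus "cm G (c1 \<otimes> c2) z \<in> K" using cm_mult[OF cc z] normal_conj[OF K, of c1] cc
        subgroup.m_closed[OF sK] by simp
    qed
    thus "c1 \<otimes> c2 \<in> ZK G K" unfolding ZK_def using cc by auto
  qed
qed

lemma ZK_mono: "K \<subseteq> K' \<Longrightarrow> ZK G K \<subseteq> ZK G K'"
  unfolding ZK_def by auto

definition cg :: "'a set \<Rightarrow> 'a \<Rightarrow> 'a \<Rightarrow> bool" where
  "cg K x y \<longleftrightarrow> x \<in> carrier G \<and> y \<in> carrier G \<and> x \<otimes> inv y \<in> K"

lemma cg_refl: "K \<lhd> G \<Longrightarrow> x \<in> carrier G \<Longrightarrow> cg K x x"
  unfolding cg_def using normal_sub subgroup.one_closed by (simp, blast)

lemma cg_trans: assumes K: "K \<lhd> G" and "cg K x y" "cg K y z" shows "cg K x z"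
proof -
  have c: "x \<in> carrier G" "y \<in> carrier G" "z \<in> carrier G" using assms unfolding cg_def by auto
  have "(x \<otimes> inv y) \<otimes> (y \<otimes> inv z) \<in> K" using assms unfolding cg_def
    using subgroup.m_closed[OF normal_sub[OF K]] by blast
  also have "(x \<otimes> inv y) \<otimes> (y \<otimes> inv z) = x \<otimes> inv z" using c by (simp add: m_assoc)
  finally show ?thesis using c unfolding cg_def by auto
qed

lemma cg_mult: assumes K: "K \<lhd> G" and "cg K x x'" "cg K y y'" shows "cg K (x \<otimes> y) (x' \<otimes> y')"
proof -
  have c: "x \<in> carrier G" "y \<in> carrier G" "x' \<in> carrier G" "y' \<in> carrier G" using assms unfolding cg_def by auto
  have "x \<otimes> (y \<otimes> inv y') \<otimes> inv x \<in> K" using assms c normal_conj unfolding cg_def by blast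
  hence "(x \<otimes> (y \<otimes> inv y') \<otimes> inv x) \<otimes> (x \<otimes> inv x') \<in> K" using assms unfolding cg_def
    using subgroup.m_closed[OF normal_sub[OF K]] by blast
  also have "(x \<otimes> (y \<otimes> inv y') \<otimes> inv x) \<otimes> (x \<otimes> inv x') = (x \<otimes> y) \<otimes> inv (x' \<otimes> y')"
    using c by (simp add: m_assoc inv_mult_group)
  finally show ?thesis using c unfolding cg_def by auto
qed

lemma cg_mem: assumes K: "K \<lhd> G" and "cg K x y" "y \<in> K" shows "x \<in> K"
proof -
  have c: "x \<in> carrier G" "y \<in> carrier G" using assms unfolding cg_def by auto
  have "(x \<otimes> inv y) \<otimes> y \<in> K" using assms unfolding cg_def
    using subgroup.m_closed[OF normal_sub[OF K]] by blast
  thus ?thesis using c by (simp add: m_assoc)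
qed

lemma ZK_carrier: "c \<in> ZK G K \<Longrightarrow> c \<in> carrier G" unfolding ZK_def by auto

lemma ZK_comm: assumes "c \<in> ZK G K" "a \<in> carrier G" shows "cg K (c \<otimes> a) (a \<otimes> c)"
proof -
  have c: "c \<in> carrier G" using assms ZK_carrier by blast
  have "cm G c a \<in> K" using assms unfolding ZK_def by auto
  moreover have "cm G c a = (c \<otimes> a) \<otimes> inv (a \<otimes> c)" using c assms(2)
    by (simp add: cm_def m_assoc inv_mult_group)
  ultimately show ?thesis using c assms(2) unfolding cg_def by auto
qed

lemma ZK_pow: "K \<lhd> G \<Longrightarrow> c \<in> ZK G K \<Longrightarrow> c [^] (k::nat) \<in> ZK G K"
proof (induction k)
  case 0 then show ?case using subgroup.one_closed[OF ZK_subgroup] by simp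
next
  case (Suc k) then show ?case using subgroup.m_closed[OF ZK_subgroup] by simp
qed

lemma lemY: assumes K: "K \<lhd> G" and c: "c \<in> ZK G K" and a: "a \<in> carrier G"
  shows "cg K ((a \<otimes> c) [^] (k::nat)) (a [^] k \<otimes> c [^] k)"
proof (induction k)
  case 0 then show ?case using cg_refl[OF K] by simp
next
  case (Suc k)
  have cc: "c \<in> carrier G" using c ZK_carrier by blast
  have ck: "c [^] k \<in> ZK G K" using ZK_pow[OF K c] .
  have ac: "a \<otimes> c \<in> carrier G" using a cc by simp
  have s1: "cg K ((a \<otimes> c) [^] k \<otimes> (a \<otimes> c)) ((a [^] k \<otimes> c [^] k) \<otimes> (a \<otimes> c))"
    by (rule cg_mult[OF K Suc.IH cg_refl[OF K ac]])
  have e1: "(a [^] k \<otimes> c [^] k) \<otimes> (a \<otimes> c) = a [^] k \<otimes> ((c [^] k \<otimes> a) \<otimes> c)"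
    using a cc by (simp add: m_assoc)
  have s2: "cg K (a [^] k \<otimes> ((c [^] k \<otimes> a) \<otimes> c)) (a [^] k \<otimes> ((a \<otimes> c [^] k) \<otimes> c))"
    by (rule cg_mult[OF K cg_refl[OF K] cg_mult[OF K ZK_comm[OF ck a] cg_refl[OF K cc]]]) (use a in simp)
  have e2: "a [^] k \<otimes> ((a \<otimes> c [^] k) \<otimes> c) = a [^] Suc k \<otimes> c [^] Suc k"
    using a cc by (simp add: m_assoc)
  have "cg K ((a \<otimes> c) [^] k \<otimes> (a \<otimes> c)) (a [^] Suc k \<otimes> c [^] Suc k)"
    using cg_trans[OF K s1[unfolded e1] s2[unfolded e2]] .
  thus ?case by simp
qed

lemma cg_sym: assumes K: "K \<lhd> G" and "cg K x y" shows "cg K y x"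
proof -
  have c: "x \<in> carrier G" "y \<in> carrier G" using assms unfolding cg_def by auto
  have "inv (x \<otimes> inv y) \<in> K" using assms subgroup.m_inv_closed[OF normal_sub[OF K]] unfolding cg_def by blast
  thus ?thesis using c unfolding cg_def by (simp add: inv_mult_group)
qed

lemma lemX: assumes K: "K \<lhd> G" and u: "u \<in> carrier G" and z: "z \<in> carrier G"
  and d: "cm G u z \<in> ZK G K"
  shows "cg K (cm G (u [^] (k::nat)) z) ((cm G u z) [^] k)"
proof (induction k)
  case 0 then show ?case using cg_refl[OF K] z by (simp add: cm_def)
next
  case (Suc k)
  define d where "d = cm G u z"
  have dc: "d \<in> carrier G" using d_def u z by simp
  have dk: "d [^] k \<in> ZK G K" using ZK_pow[OF K] d d_def by simp
  have dkc: "d [^] k \<in> carrier G" using dc by simp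
  have s1: "cg K (u \<otimes> cm G (u [^] k) z \<otimes> inv u \<otimes> d) (u \<otimes> d [^] k \<otimes> inv u \<otimes> d)"
    using cg_mult[OF K cg_mult[OF K cg_mult[OF K cg_refl[OF K u] Suc.IH] cg_refl[OF K inv_closed[OF u]]] cg_refl[OF K dc]]
    unfolding d_def .
  have "cg K (u \<otimes> d [^] k) (d [^] k \<otimes> u)" using cg_sym[OF K ZK_comm[OF dk u]] .
  hence s2: "cg K (u \<otimes> d [^] k \<otimes> inv u \<otimes> d) (d [^] k \<otimes> u \<otimes> inv u \<otimes> d)"
    using cg_mult[OF K cg_mult[OF K _ cg_refl[OF K inv_closed[OF u]]] cg_refl[OF K dc]] by blast
  have e: "d [^] k \<otimes> u \<otimes> inv u \<otimes> d = d [^] Suc k" using u dc by (simp add: m_assoc)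
  have "cg K (u \<otimes> cm G (u [^] k) z \<otimes> inv u \<otimes> d) (d [^] Suc k)"
    using cg_trans[OF K s1 s2[unfolded e]] .
  thus ?case using cm_pow[OF u z] d_def by simp
qed

end

context group begin

lemma gen_normal: assumes S: "S \<subseteq> carrier G" and cj: "\<And>g s. g \<in> carrier G \<Longrightarrow> s \<in> S \<Longrightarrow> g \<otimes> s \<otimes> inv g \<in> S"
  shows "generate G S \<lhd> G"
proof (rule normal_invI)
  show "subgroup (generate G S) G" using generate_is_subgroup[OF S] .
  fix g h assume g: "g \<in> carrier G" and h: "h \<in> generate G S"
  from h show "g \<otimes> h \<otimes> inv g \<in> generate G S"
  proof (induction rule: generate.induct)
    case one then show ?case using g generate.one by simp
  next
    case (incl h) from cj[OF g incl] show ?case by (rule generate.incl)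
  next
    case (inv h)
    have hc: "h \<in> carrier G" using inv S by blast
    have "g \<otimes> inv h \<otimes> inv g = inv (g \<otimes> h \<otimes> inv g)" using g hc by (simp add: inv_mult_group m_assoc)
    then show ?case using generate_m_inv_closed[OF S generate.incl[OF cj[OF g inv]]] by simp
  next
    case (eng h1 h2)
    have hc: "h1 \<in> carrier G" "h2 \<in> carrier G" using eng generate_in_carrier[OF S] by auto
    have "g \<otimes> (h1 \<otimes> h2) \<otimes> inv g = (g \<otimes> h1 \<otimes> inv g) \<otimes> (g \<otimes> h2 \<otimes> inv g)"
      using g hc by (simp add: m_assoc)
    then show ?case using generate.eng[OF eng.IH] by simp
  qed
qed

lemma lcs_normal: "lcs G i \<lhd> G"
proof (induction i)
  case 0 then show ?case by (simp add: normal_invI subgroup_self)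
next
  case (Suc i)
  let ?S = "{x \<otimes> y \<otimes> inv x \<otimes> inv y | x y. x \<in> lcs G i \<and> y \<in> carrier G}"
  have sub: "lcs G i \<subseteq> carrier G" using subgroup.subset[OF normal_sub[OF Suc.IH]] .
  have S: "?S \<subseteq> carrier G" using sub by auto
  show ?case unfolding lcs.simps comm_subgroup_def
  proof (rule gen_normal[OF S])
    fix g s assume g: "g \<in> carrier G" and s: "s \<in> ?S"
    then obtain x y where xy: "s = x \<otimes> y \<otimes> inv x \<otimes> inv y" "x \<in> lcs G i" "y \<in> carrier G" by blast
    have xc: "x \<in> carrier G" using xy sub by blast
    have "g \<otimes> s \<otimes> inv g = (g \<otimes> x \<otimes> inv g) \<otimes> (g \<otimes> y \<otimes> inv g) \<otimes> inv (g \<otimes> x \<otimes> inv g) \<otimes> inv (g \<otimes> y \<otimes> inv g)"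
      using xy(1,3) xc g by (simp add: m_assoc inv_mult_group)
    moreover have "g \<otimes> x \<otimes> inv g \<in> lcs G i" using normal_conj[OF Suc.IH g xy(2)] .
    ultimately show "g \<otimes> s \<otimes> inv g \<in> ?S" using g xy(3) by blast
  qed
qed

lemma gamma_normal: "gamma G i \<lhd> G" unfolding gamma_def using lcs_normal .

lemma gamma_sub: "gamma G i \<subseteq> carrier G" by (rule subgroup.subset[OF normal_sub[OF gamma_normal]])

lemma lcs_ZK: "lcs G i \<subseteq> ZK G (lcs G (Suc i))"
proof
  fix x assume x: "x \<in> lcs G i"
  have xc: "x \<in> carrier G" using subgroup.mem_carrier[OF normal_sub[OF lcs_normal] x] .
  have "\<forall>z\<in>carrier G. cm G x z \<in> lcs G (Suc i)"
  proof
    fix z assume z: "z \<in> carrier G"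
    show "cm G x z \<in> lcs G (Suc i)" unfolding lcs.simps comm_subgroup_def cm_def
      by (rule generate.incl) (use x z in blast)
  qed
  thus "x \<in> ZK G (lcs G (Suc i))" unfolding ZK_def using xc by auto
qed

lemma lcs_dec: "lcs G (Suc i) \<subseteq> lcs G i"
proof -
  have sub: "subgroup (lcs G i) G" using normal_sub[OF lcs_normal] .
  show ?thesis unfolding lcs.simps comm_subgroup_def
  proof (rule generate_subgroup_incl[OF _ sub])
    show "{x \<otimes> y \<otimes> inv x \<otimes> inv y |x y. x \<in> lcs G i \<and> y \<in> carrier G} \<subseteq> lcs G i"
    proof
      fix s assume "s \<in> {x \<otimes> y \<otimes> inv x \<otimes> inv y |x y. x \<in> lcs G i \<and> y \<in> carrier G}"
      then obtain x y where xy: "s = x \<otimes> y \<otimes> inv x \<otimes> inv y" "x \<in> lcs G i" "y \<in> carrier G" by blast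
      have xc: "x \<in> carrier G" using subgroup.mem_carrier[OF sub xy(2)] .
      have "s = x \<otimes> (y \<otimes> inv x \<otimes> inv y)" using xy xc by (simp add: m_assoc)
      moreover have "y \<otimes> inv x \<otimes> inv y \<in> lcs G i"
        using normal_conj[OF lcs_normal xy(3) subgroup.m_inv_closed[OF sub xy(2)]] .
      ultimately show "s \<in> lcs G i" using subgroup.m_closed[OF sub xy(2)] by simp
    qed
  qed
qed

lemma gamma_ZK: "gamma G i \<subseteq> ZK G (gamma G (Suc i))"
proof (cases i)
  case 0
  have "carrier G \<subseteq> ZK G (carrier G)" unfolding ZK_def cm_def by auto
  then show ?thesis using 0 by (simp add: gamma_def)
next
  case (Suc i') then show ?thesis using lcs_ZK by (simp add: gamma_def)
qed

lemma gamma_dec: "gamma G (Suc i) \<subseteq> gamma G i"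
proof (cases i)
  case 0 then show ?thesis by (simp add: gamma_def)
next
  case (Suc k) then show ?thesis using lcs_dec[of k] by (simp add: gamma_def)
qed

lemma pow_gen_sub: "H \<subseteq> carrier G \<Longrightarrow> {h [^] (m::nat) | h. h \<in> H} \<subseteq> carrier G" by auto

lemma pow_subgroup_normal: assumes H: "H \<lhd> G" shows "pow_subgroup G H m \<lhd> G"
proof -
  have sub: "H \<subseteq> carrier G" using subgroup.subset[OF normal_sub[OF H]] .
  show ?thesis unfolding pow_subgroup_def
  proof (rule gen_normal[OF pow_gen_sub[OF sub]])
    fix g s assume g: "g \<in> carrier G" and s: "s \<in> {h [^] m | h. h \<in> H}"
    then obtain h where h: "s = h [^] m" "h \<in> H" by blast
    have hc: "h \<in> carrier G" using h sub by blast
    have "g \<otimes> h [^] m \<otimes> inv g = (g \<otimes> h \<otimes> inv g) [^] m"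
    proof (induction m)
      case 0 then show ?case using g by simp
    next
      case (Suc m)
      have "g \<otimes> h [^] Suc m \<otimes> inv g = (g \<otimes> h [^] m \<otimes> inv g) \<otimes> (g \<otimes> h \<otimes> inv g)"
        using g hc by (simp add: m_assoc)
      then show ?case using Suc by simp
    qed
    moreover have "g \<otimes> h \<otimes> inv g \<in> H" using normal_conj[OF H g h(2)] .
    ultimately show "g \<otimes> s \<otimes> inv g \<in> {h [^] m | h. h \<in> H}" using h by blast
  qed
qed

lemma pow_mem: "h \<in> H \<Longrightarrow> H \<subseteq> carrier G \<Longrightarrow> h [^] (m::nat) \<in> pow_subgroup G H m"
  unfolding pow_subgroup_def by (rule generate.incl) blast

lemma pow_sub: assumes "subgroup H G" shows "pow_subgroup G H m \<subseteq> H"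
  unfolding pow_subgroup_def
proof (rule generate_subgroup_incl[OF _ assms])
  show "{h [^] m |h. h \<in> H} \<subseteq> H"
  proof
    fix s assume "s \<in> {h [^] m |h. h \<in> H}"
    then obtain h where h: "s = h [^] m" "h \<in> H" by blast
    have "h [^] m \<in> H"
    proof (induction m)
      case 0 then show ?case using subgroup.one_closed[OF assms] by simp
    next
      case (Suc m) then show ?case using subgroup.m_closed[OF assms _ h(2)] by simp
    qed
    thus "s \<in> H" using h by simp
  qed
qed

lemma pow_incl: assumes S: "subgroup S G" and H: "H \<subseteq> carrier G"
  and "\<And>h. h \<in> H \<Longrightarrow> h [^] (m::nat) \<in> S" shows "pow_subgroup G H m \<subseteq> S"
  unfolding pow_subgroup_def by (rule generate_subgroup_incl[OF _ S]) (use assms in blast)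

lemma prod_normal: assumes A: "A \<lhd> G" and B: "B \<lhd> G" shows "A <#> B \<lhd> G"
proof -
  have sA: "subgroup A G" and sB: "subgroup B G" using normal_sub[OF A] normal_sub[OF B] by auto
  have subs: "A <#> B \<subseteq> carrier G" using setmult_subset_G[OF subgroup.subset[OF sA] subgroup.subset[OF sB]] .
  have sub: "subgroup (A <#> B) G"
  proof (rule subgroupI[OF subs])
    show "A <#> B \<noteq> {}" using subgroup.one_closed[OF sA] subgroup.one_closed[OF sB]
      unfolding set_mult_def by force
  next
    fix x assume "x \<in> A <#> B"
    then obtain a b where ab: "x = a \<otimes> b" "a \<in> A" "b \<in> B" unfolding set_mult_def by blast
    have c: "a \<in> carrier G" "b \<in> carrier G" using subgroup.mem_carrier[OF sA ab(2)] subgroup.mem_carrier[OF sB ab(3)] by auto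
    have "inv x = inv a \<otimes> (a \<otimes> inv b \<otimes> inv a)" using ab c by (simp add: inv_mult_group m_assoc)
    moreover have "a \<otimes> inv b \<otimes> inv a \<in> B" using normal_conj[OF B c(1) subgroup.m_inv_closed[OF sB ab(3)]] .
    moreover have "inv a \<in> A" using subgroup.m_inv_closed[OF sA ab(2)] .
    ultimately show "inv x \<in> A <#> B" unfolding set_mult_def by blast
  next
    fix x y assume "x \<in> A <#> B" "y \<in> A <#> B"
    then obtain a b a' b' where ab: "x = a \<otimes> b" "a \<in> A" "b \<in> B" "y = a' \<otimes> b'" "a' \<in> A" "b' \<in> B"
      unfolding set_mult_def by blast
    have c: "a \<in> carrier G" "b \<in> carrier G" "a' \<in> carrier G" "b' \<in> carrier G"
      using subgroup.mem_carrier[OF sA ab(2)] subgroup.mem_carrier[OF sB ab(3)] subgroup.mem_carrier[OF sA ab(5)] subgroup.mem_carrier[OF sB ab(6)] by auto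
    have "x \<otimes> y = (a \<otimes> a') \<otimes> ((inv a' \<otimes> b \<otimes> inv (inv a')) \<otimes> b')" using ab c by (simp add: m_assoc)
    moreover have "inv a' \<otimes> b \<otimes> inv (inv a') \<in> B" using normal_conj[OF B inv_closed[OF c(3)] ab(3)] .
    ultimately show "x \<otimes> y \<in> A <#> B" using subgroup.m_closed[OF sA ab(2) ab(5)]
      subgroup.m_closed[OF sB _ ab(6)] unfolding set_mult_def by blast
  qed
  show ?thesis
  proof (rule normal_invI[OF sub])
    fix g x assume g: "g \<in> carrier G" and "x \<in> A <#> B"
    then obtain a b where ab: "x = a \<otimes> b" "a \<in> A" "b \<in> B" unfolding set_mult_def by blast
    have c: "a \<in> carrier G" "b \<in> carrier G" using subgroup.mem_carrier[OF sA ab(2)] subgroup.mem_carrier[OF sB ab(3)] by auto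
    have "g \<otimes> x \<otimes> inv g = (g \<otimes> a \<otimes> inv g) \<otimes> (g \<otimes> b \<otimes> inv g)" using ab c g by (simp add: m_assoc)
    thus "g \<otimes> x \<otimes> inv g \<in> A <#> B" using normal_conj[OF A g ab(2)] normal_conj[OF B g ab(3)]
      unfolding set_mult_def by blast
  qed
qed

lemma prod_incl: assumes "subgroup S G" "A \<subseteq> S" "B \<subseteq> S" shows "A <#> B \<subseteq> S"
  using assms subgroup.m_closed unfolding set_mult_def by fastforce

lemma prod_left: assumes "subgroup A G" "B \<subseteq> carrier G" shows "B \<subseteq> A <#> B"
proof
  fix b assume b: "b \<in> B"
  hence "b = \<one> \<otimes> b" using assms(2) by auto
  thus "b \<in> A <#> B" using b subgroup.one_closed[OF assms(1)] unfolding set_mult_def by blast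
qed

lemma prod_right: assumes "subgroup B G" "A \<subseteq> carrier G" shows "A \<subseteq> A <#> B"
proof
  fix a assume a: "a \<in> A"
  hence "a = a \<otimes> \<one>" using assms(2) by auto
  thus "a \<in> A <#> B" using a subgroup.one_closed[OF assms(1)] unfolding set_mult_def by blast
qed

end

context group begin

lemma N_lt: "l < m \<Longrightarrow> Nnk G m l = pow_subgroup G (gamma G l) (4 ^ (m - l)) <#> Nnk G m (Suc l)"
  unfolding Nnk_def by (simp add: upt_conv_Cons)

lemma N_ge: "m \<le> l \<Longrightarrow> Nnk G m l = gamma G m"
  unfolding Nnk_def by simp

lemma N_normal: "Nnk G m l \<lhd> G"
proof (cases "l \<le> m")
  case True
  then show ?thesis
  proof (induction rule: inc_induct)
    case base then show ?case using N_ge[of m m] gamma_normal by simp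
  next
    case (step n)
    then show ?case using N_lt[OF step(2)] prod_normal[OF pow_subgroup_normal[OF gamma_normal]] by simp
  qed
next
  case False then show ?thesis using N_ge[of m l] gamma_normal by simp
qed

lemma N_subgroup: "subgroup (Nnk G m l) G" using normal_sub[OF N_normal] .

lemma N_carrier: "x \<in> Nnk G m l \<Longrightarrow> x \<in> carrier G"
  using subgroup.mem_carrier[OF N_subgroup] .

lemma pow_subgroup_sub: "subgroup (pow_subgroup G (gamma G k) e) G"
  using normal_sub[OF pow_subgroup_normal[OF gamma_normal]] .

lemma N_mono1: "Nnk G m (Suc l) \<subseteq> Nnk G m l"
proof (cases "l < m")
  case True then show ?thesis
    using N_lt[OF True] prod_left[OF pow_subgroup_sub subgroup.subset[OF N_subgroup]] by simp
next
  case False then show ?thesis using N_ge[of m l] N_ge[of m "Suc l"] by simp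
qed

lemma N_mono: "l \<le> l' \<Longrightarrow> Nnk G m l' \<subseteq> Nnk G m l"
proof (induction rule: dec_induct)
  case base then show ?case by simp
next
  case (step n) then show ?case using N_mono1[of m n] by simp
qed

lemma N_gamma: "gamma G m \<subseteq> Nnk G m l"
proof (cases "l \<le> m")
  case True
  then show ?thesis using N_mono[OF True, of m] N_ge[of m m] by simp
next
  case False then show ?thesis using N_ge[of m l] by simp
qed

lemma N_pow: "l \<le> k \<Longrightarrow> k < m \<Longrightarrow> pow_subgroup G (gamma G k) (4 ^ (m - k)) \<subseteq> Nnk G m l"
proof -
  assume a: "l \<le> k" "k < m"
  have "pow_subgroup G (gamma G k) (4 ^ (m - k)) \<subseteq> pow_subgroup G (gamma G k) (4 ^ (m - k)) <#> Nnk G m (Suc k)"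
    by (rule prod_right[OF N_subgroup subgroup.subset[OF pow_subgroup_sub]])
  also have "\<dots> = Nnk G m k" using N_lt[OF a(2)] by simp
  also have "\<dots> \<subseteq> Nnk G m l" using N_mono[OF a(1)] .
  finally show ?thesis .
qed

lemma B_gen:
  assumes hyp: "\<And>k. l \<le> k \<Longrightarrow> k < m \<Longrightarrow> pow_subgroup G (gamma G k) (4 ^ (m - k)) \<subseteq> ZK G (Nnk G (Suc m) (Suc k))"
  shows "Nnk G m l \<subseteq> ZK G (Nnk G (Suc m) l)"
proof (cases "l \<le> m")
  case True
  then show ?thesis
  proof (induction rule: inc_induct)
    case base
    have "gamma G m \<subseteq> ZK G (gamma G (Suc m))" by (rule gamma_ZK)
    also have "\<dots> \<subseteq> ZK G (Nnk G (Suc m) m)" by (rule ZK_mono[OF N_gamma])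
    finally show ?case using N_ge[of m m] by simp
  next
    case (step n)
    have Z: "subgroup (ZK G (Nnk G (Suc m) n)) G" by (rule ZK_subgroup[OF N_normal])
    have mo: "ZK G (Nnk G (Suc m) (Suc n)) \<subseteq> ZK G (Nnk G (Suc m) n)" by (rule ZK_mono[OF N_mono1])
    have "pow_subgroup G (gamma G n) (4 ^ (m - n)) <#> Nnk G m (Suc n) \<subseteq> ZK G (Nnk G (Suc m) n)"
      by (rule prod_incl[OF Z]) (use hyp[OF step(1) step(2)] step(3) mo in auto)
    then show ?case using N_lt[OF step(2)] by simp
  qed
next
  case False
  have "gamma G m \<subseteq> ZK G (gamma G (Suc m))" by (rule gamma_ZK)
  also have "\<dots> \<subseteq> ZK G (Nnk G (Suc m) l)" by (rule ZK_mono[OF N_gamma])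
  finally show ?thesis using N_ge[of m l] False by simp
qed

definition W :: "'a set \<Rightarrow> 'a set" where
  "W K = {z \<in> ZK G K. z [^] (4::nat) \<in> K}"

lemma W_mono: "K \<subseteq> K' \<Longrightarrow> W K \<subseteq> W K'"
  unfolding W_def using ZK_mono by blast

lemma W_subgroup: assumes K: "K \<lhd> G" shows "subgroup (W K) G"
proof -
  have sK: "subgroup K G" using normal_sub[OF K] .
  have Z: "subgroup (ZK G K) G" using ZK_subgroup[OF K] .
  show ?thesis
  proof (rule subgroupI)
    show "W K \<subseteq> carrier G" unfolding W_def using ZK_carrier by blast
    have "\<one> \<in> W K" unfolding W_def using subgroup.one_closed[OF Z] subgroup.one_closed[OF sK] by simp
    thus "W K \<noteq> {}" by blast
  next
    fix z assume z: "z \<in> W K"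
    hence zz: "z \<in> ZK G K" "z [^] (4::nat) \<in> K" unfolding W_def by auto
    have zc: "z \<in> carrier G" using ZK_carrier[OF zz(1)] .
    have "inv z [^] (4::nat) = inv (z [^] (4::nat))" using nat_pow_inv[OF zc] .
    thus "inv z \<in> W K" unfolding W_def using subgroup.m_inv_closed[OF Z zz(1)] subgroup.m_inv_closed[OF sK zz(2)]
      by simp
  next
    fix a b assume a: "a \<in> W K" and b: "b \<in> W K"
    hence aa: "a \<in> ZK G K" "a [^] (4::nat) \<in> K" and bb: "b \<in> ZK G K" "b [^] (4::nat) \<in> K"
      unfolding W_def by auto
    have ac: "a \<in> carrier G" using ZK_carrier[OF aa(1)] .
    have "cg K ((a \<otimes> b) [^] (4::nat)) (a [^] (4::nat) \<otimes> b [^] (4::nat))" using lemY[OF K bb(1) ac] .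
    moreover have "a [^] (4::nat) \<otimes> b [^] (4::nat) \<in> K" using subgroup.m_closed[OF sK aa(2) bb(2)] .
    ultimately have "(a \<otimes> b) [^] (4::nat) \<in> K" using cg_mem[OF K] by blast
    thus "a \<otimes> b \<in> W K" unfolding W_def using subgroup.m_closed[OF Z aa(1) bb(1)] by simp
  qed
qed

lemma C_gen:
  assumes hyp: "\<And>k. l \<le> k \<Longrightarrow> k < m \<Longrightarrow> pow_subgroup G (gamma G k) (4 ^ (m - k)) \<subseteq> ZK G (Nnk G (Suc m) (Suc k))"
  and lm: "l \<le> m"
  shows "Nnk G m l \<subseteq> W (Nnk G (Suc m) l)"
  using lm
proof (induction rule: inc_induct)
  case base
  show ?case
  proof
    fix z assume "z \<in> Nnk G m m"
    hence z: "z \<in> gamma G m" using N_ge[of m m] by simp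
    have "z \<in> ZK G (gamma G (Suc m))" using gamma_ZK z by blast
    hence "z \<in> ZK G (Nnk G (Suc m) m)" using ZK_mono[OF N_gamma] by blast
    moreover have "z [^] (4::nat) \<in> Nnk G (Suc m) m"
      using pow_mem[OF z gamma_sub, of "4 ^ (Suc m - m)"] N_pow[of m m "Suc m"] by auto
    ultimately show "z \<in> W (Nnk G (Suc m) m)" unfolding W_def by simp
  qed
next
  case (step n)
  have Wn: "subgroup (W (Nnk G (Suc m) n)) G" by (rule W_subgroup[OF N_normal])
  have Bn: "Nnk G m n \<subseteq> ZK G (Nnk G (Suc m) n)"
    by (rule B_gen) (use hyp step(1) in auto)
  have P: "pow_subgroup G (gamma G n) (4 ^ (m - n)) \<subseteq> W (Nnk G (Suc m) n)"
  proof (rule pow_incl[OF Wn gamma_sub])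
    fix h assume h: "h \<in> gamma G n"
    have hc: "h \<in> carrier G" using h gamma_sub by blast
    have m1: "h [^] ((4::nat) ^ (m - n)) \<in> Nnk G m n"
      using pow_mem[OF h gamma_sub] N_pow[of n n m] step(2) by auto
    have "(h [^] ((4::nat) ^ (m - n))) [^] (4::nat) = h [^] ((4::nat) ^ (Suc m - n))"
      using nat_pow_pow[OF hc] step(2) by (simp add: Suc_diff_le mult.commute)
    moreover have "h [^] ((4::nat) ^ (Suc m - n)) \<in> Nnk G (Suc m) n"
      using pow_mem[OF h gamma_sub] N_pow[of n n "Suc m"] step(2) by auto
    ultimately show "h [^] ((4::nat) ^ (m - n)) \<in> W (Nnk G (Suc m) n)"
      unfolding W_def using Bn m1 by auto
  qed
  have "pow_subgroup G (gamma G n) (4 ^ (m - n)) <#> Nnk G m (Suc n) \<subseteq> W (Nnk G (Suc m) n)"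
    by (rule prod_incl[OF Wn P]) (use step(3) W_mono[OF N_mono1] in blast)
  then show ?case using N_lt[OF step(2)] by simp
qed

lemma lemA: "\<forall>i. pow_subgroup G (gamma G i) (4 ^ s) \<subseteq> ZK G (Nnk G (i + s + 1) (i + 1))"
proof (induction s rule: less_induct)
  case (less s)
  show ?case
  proof (cases s)
    case 0
    show ?thesis
    proof
      fix i
      have "pow_subgroup G (gamma G i) (4 ^ s) \<subseteq> gamma G i" using pow_sub[OF normal_sub[OF gamma_normal]] .
      also have "\<dots> \<subseteq> ZK G (gamma G (Suc i))" by (rule gamma_ZK)
      finally show "pow_subgroup G (gamma G i) (4 ^ s) \<subseteq> ZK G (Nnk G (i + s + 1) (i + 1))"
        using N_ge[of "i+1" "i+1"] 0 by simp
    qed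
  next
    case (Suc s')
    show ?thesis
    proof
      fix i
      define m where "m = i + s"
      define K where "K = Nnk G (Suc m) (Suc i)"
      have KN: "K \<lhd> G" unfolding K_def by (rule N_normal)
      have hyp: "\<And>k. Suc i \<le> k \<Longrightarrow> k < m \<Longrightarrow> pow_subgroup G (gamma G k) (4 ^ (m - k)) \<subseteq> ZK G (Nnk G (Suc m) (Suc k))"
      proof -
        fix k assume k: "Suc i \<le> k" "k < m"
        have "m - k < s" using k m_def Suc by simp
        hence "pow_subgroup G (gamma G k) (4 ^ (m - k)) \<subseteq> ZK G (Nnk G (k + (m - k) + 1) (k + 1))"
          using less.IH by blast
        moreover have "k + (m - k) + 1 = Suc m" using k by simp
        ultimately show "pow_subgroup G (gamma G k) (4 ^ (m - k)) \<subseteq> ZK G (Nnk G (Suc m) (Suc k))" by simp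
      qed
      have Bm: "Nnk G m (Suc i) \<subseteq> ZK G K" unfolding K_def by (rule B_gen[OF hyp])
      have im: "Suc i \<le> m" unfolding m_def using Suc by simp
      have Cm: "Nnk G m (Suc i) \<subseteq> W K" unfolding K_def by (rule C_gen[OF hyp im])
      have IHs: "pow_subgroup G (gamma G i) (4 ^ s') \<subseteq> ZK G (Nnk G m (Suc i))"
        using less.IH[of s'] Suc m_def by simp
      have "pow_subgroup G (gamma G i) (4 ^ s) \<subseteq> ZK G K"
      proof (rule pow_incl[OF ZK_subgroup[OF KN] gamma_sub])
        fix g assume g: "g \<in> gamma G i"
        have gc: "g \<in> carrier G" using g gamma_sub by blast
        define u where "u = g [^] ((4::nat) ^ s')"
        have uc: "u \<in> carrier G" using gc u_def by simp
        have uZ: "u \<in> ZK G (Nnk G m (Suc i))" using IHs pow_mem[OF g gamma_sub] u_def by blast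
        have u4: "u [^] (4::nat) = g [^] ((4::nat) ^ s)"
          using nat_pow_pow[OF gc] Suc u_def by (simp add: mult.commute)
        have "\<forall>z\<in>carrier G. cm G (g [^] ((4::nat) ^ s)) z \<in> K"
        proof
          fix z assume z: "z \<in> carrier G"
          have d: "cm G u z \<in> Nnk G m (Suc i)" using uZ z unfolding ZK_def by auto
          have dZ: "cm G u z \<in> ZK G K" using Bm d by blast
          have d4: "(cm G u z) [^] (4::nat) \<in> K" using Cm d unfolding W_def by blast
          have "cg K (cm G (u [^] (4::nat)) z) ((cm G u z) [^] (4::nat))" using lemX[OF KN uc z dZ] .
          hence "cm G (u [^] (4::nat)) z \<in> K" using cg_mem[OF KN _ d4] by blast
          thus "cm G (g [^] ((4::nat) ^ s)) z \<in> K" using u4 by simp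
        qed
        thus "g [^] ((4::nat) ^ s) \<in> ZK G K" unfolding ZK_def using gc by simp
      qed
      thus "pow_subgroup G (gamma G i) (4 ^ s) \<subseteq> ZK G (Nnk G (i + s + 1) (i + 1))"
        unfolding K_def m_def by simp
    qed
  qed
qed

lemma lemB: "Nnk G m l \<subseteq> ZK G (Nnk G (Suc m) l)"
proof (rule B_gen)
  fix k assume k: "l \<le> k" "k < m"
  have "pow_subgroup G (gamma G k) (4 ^ (m - k)) \<subseteq> ZK G (Nnk G (k + (m - k) + 1) (k + 1))"
    using lemA by blast
  moreover have "k + (m - k) + 1 = Suc m" using k by simp
  ultimately show "pow_subgroup G (gamma G k) (4 ^ (m - k)) \<subseteq> ZK G (Nnk G (Suc m) (Suc k))" by simp
qed

lemma lemC: assumes "l \<le> m" "z \<in> Nnk G m l" shows "z [^] (4::nat) \<in> Nnk G (Suc m) l"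
proof -
  have "Nnk G m l \<subseteq> W (Nnk G (Suc m) l)"
  proof (rule C_gen[OF _ assms(1)])
    fix k assume k: "l \<le> k" "k < m"
    have "pow_subgroup G (gamma G k) (4 ^ (m - k)) \<subseteq> ZK G (Nnk G (k + (m - k) + 1) (k + 1))"
      using lemA by blast
    moreover have "k + (m - k) + 1 = Suc m" using k by simp
    ultimately show "pow_subgroup G (gamma G k) (4 ^ (m - k)) \<subseteq> ZK G (Nnk G (Suc m) (Suc k))" by simp
  qed
  thus ?thesis using assms(2) unfolding W_def by blast
qed


end

context group begin

lemma lemM: "j \<le> a \<Longrightarrow> x \<in> Nnk G a j \<Longrightarrow> y \<in> Nnk G (Suc a) j \<Longrightarrow>
  (x \<otimes> y) [^] ((4::nat) ^ e) \<otimes> inv (x [^] ((4::nat) ^ e)) \<in> Nnk G (a + 1 + e) j"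
proof (induction e arbitrary: a x y)
  case 0
  have xc: "x \<in> carrier G" using N_carrier[OF 0(2)] .
  have yc: "y \<in> carrier G" using N_carrier[OF 0(3)] .
  have "x \<otimes> y \<otimes> inv x \<in> Nnk G (Suc a) j" using normal_conj[OF N_normal xc 0(3)] .
  then show ?case using xc yc by simp
next
  case (Suc e)
  define K2 where "K2 = Nnk G (Suc (Suc a)) j"
  have K2N: "K2 \<lhd> G" unfolding K2_def by (rule N_normal)
  have xc: "x \<in> carrier G" using N_carrier[OF Suc.prems(2)] .
  have yc: "y \<in> carrier G" using N_carrier[OF Suc.prems(3)] .
  have yZ: "y \<in> ZK G K2" unfolding K2_def using lemB Suc.prems(3) by blast
  have y4: "y [^] (4::nat) \<in> K2" unfolding K2_def by (rule lemC) (use Suc.prems in auto)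
  have x4: "x [^] (4::nat) \<in> Nnk G (Suc a) j" by (rule lemC) (use Suc.prems in auto)
  have x4c: "x [^] (4::nat) \<in> carrier G" using xc by simp
  have c1: "cg K2 ((x \<otimes> y) [^] (4::nat)) (x [^] (4::nat) \<otimes> y [^] (4::nat))" using lemY[OF K2N yZ xc] .
  have c2: "cg K2 (x [^] (4::nat) \<otimes> y [^] (4::nat)) (x [^] (4::nat))"
    using normal_conj[OF K2N x4c y4] x4c yc unfolding cg_def by simp
  have c3: "(x \<otimes> y) [^] (4::nat) \<otimes> inv (x [^] (4::nat)) \<in> K2" using cg_trans[OF K2N c1 c2] unfolding cg_def by blast
  define w where "w = inv (x [^] (4::nat)) \<otimes> (x \<otimes> y) [^] (4::nat)"
  have wc: "w \<in> carrier G" using w_def xc yc by simp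
  have "w = inv (x [^] (4::nat)) \<otimes> ((x \<otimes> y) [^] (4::nat) \<otimes> inv (x [^] (4::nat))) \<otimes> inv (inv (x [^] (4::nat)))"
    unfolding w_def using xc yc by (simp add: m_assoc)
  hence wK: "w \<in> Nnk G (Suc (Suc a)) j" using normal_conj[OF K2N inv_closed[OF x4c] c3] K2_def by simp
  have xw: "x [^] (4::nat) \<otimes> w = (x \<otimes> y) [^] (4::nat)" unfolding w_def using xc yc by (simp add: m_assoc[symmetric])
  have IH: "(x [^] (4::nat) \<otimes> w) [^] ((4::nat) ^ e) \<otimes> inv ((x [^] (4::nat)) [^] ((4::nat) ^ e)) \<in> Nnk G (Suc a + 1 + e) j"
    by (rule Suc.IH) (use Suc.prems x4 wK in auto)
  have e1: "((x \<otimes> y) [^] (4::nat)) [^] ((4::nat) ^ e) = (x \<otimes> y) [^] ((4::nat) ^ Suc e)"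
    using nat_pow_pow[of "x \<otimes> y"] xc yc by simp
  have e2: "(x [^] (4::nat)) [^] ((4::nat) ^ e) = x [^] ((4::nat) ^ Suc e)"
    using nat_pow_pow[OF xc] by simp
  have e3: "Suc a + 1 + e = a + 1 + Suc e" by simp
  show ?case using IH unfolding xw e1 e2 e3 .
qed

end

theorem mainTheorem11:
  fixes G (structure) and n j :: nat and x y
  assumes "group G"
    and "1 \<le> n"
    and "1 \<le> j" and "j \<le> n"
    and "x \<in> gamma G j"
    and "y \<in> pow_subgroup G (gamma G j) 4 <#>\<^bsub>G\<^esub> gamma G (j + 1)"
  shows "((x \<otimes>\<^bsub>G\<^esub> y) [^]\<^bsub>G\<^esub> ((4::nat) ^ (n - j))) \<otimes>\<^bsub>G\<^esub> inv\<^bsub>G\<^esub> (x [^]\<^bsub>G\<^esub> ((4::nat) ^ (n - j)))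
         \<in> Nnk G (n + 1) j"
proof -
  interpret group G by (rule assms(1))
  have x: "x \<in> Nnk G j j" using assms(5) N_ge[of j j] by simp
  have "Nnk G (Suc j) j = pow_subgroup G (gamma G j) 4 <#> gamma G (j + 1)"
    using N_lt[of j "Suc j"] N_ge[of "Suc j" "Suc j"] by simp
  hence y: "y \<in> Nnk G (Suc j) j" using assms(6) by simp
  have "j + 1 + (n - j) = n + 1" using assms(4) by simp
  thus ?thesis using lemM[OF le_refl x y, of "n - j"] by simp
qed


end
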